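(* Let $A$ be an evolution algebra over a commutative ring $R$ with finite basis $x_1,\dots,x_N$ and structure coefficient matrix $C=(c_{ki})_{N\times N}$. For $\alpha=(a_1,\dots,a_N)\in R^N$ let $C_\alpha=(a_jc_{kj})_{k,j}$ (the $j$-th column of $C$ multiplied by $a_j$). Then $A$ is nil if and only if for every $\alpha\in R^N$ there exists a positive integer $k_\alpha$ such that $C_\alpha^{k_\alpha}\alpha^T=0$.
   Context: An evolution algebra over a commutative ring $R$ is a free $R$-module $A$ with basis $\{x_i\}$ equipped with the $R$-bilinear multiplication determined by $x_ix_j=0$ for $i\ne j$ and $x_i^2=\sum_k c_{ki}x_k$ with $c_{ki}\in R$. The structure coefficient matrix $C$ has $(k,i)$ entry $c_{ki}$. Principal powers: $a^1=a$, $a^n=a^{n-1}a$. $A$ is nil if for every $a\in A$ there is $n\in\mathbb{N}$ with $a^n=0$. *)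

theory Defs
  imports "Jordan_Normal_Form.Matrix"
begin

text \<open>An evolution algebra over a commutative ring R with basis x_1..x_N and
structure matrix C (entry (k,i) = c_ki, x_i^2 = sum_k c_ki x_k).  Elements are
coordinate vectors of dimension N w.r.t. the basis.  Bilinearity and
x_i x_j = 0 for i <> j give (a b)_k = sum_i c_ki a_i b_i.\<close>

definition evo_mult :: "'a::comm_ring_1 mat \<Rightarrow> 'a vec \<Rightarrow> 'a vec \<Rightarrow> 'a vec" where
  "evo_mult C a b = vec (dim_row C) (\<lambda>k. \<Sum>i<dim_col C. C $$ (k, i) * (a $ i * b $ i))"

text \<open>Principal powers: a^1 = a, a^(n+1) = a^n a.  (a^0 is not used.)\<close>
fun evo_ppow :: "'a::comm_ring_1 mat \<Rightarrow> 'a vec \<Rightarrow> nat \<Rightarrow> 'a vec" where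
  "evo_ppow C a 0 = a"
| "evo_ppow C a (Suc 0) = a"
| "evo_ppow C a (Suc (Suc n)) = evo_mult C (evo_ppow C a (Suc n)) a"

definition evo_nil :: "nat \<Rightarrow> 'a::comm_ring_1 mat \<Rightarrow> bool" where
  "evo_nil N C \<longleftrightarrow> (\<forall>a \<in> carrier_vec N. \<exists>n\<ge>1. evo_ppow C a n = 0\<^sub>v N)"

definition C_alpha :: "'a::comm_ring_1 mat \<Rightarrow> 'a vec \<Rightarrow> 'a mat" where
  "C_alpha C \<alpha> = mat (dim_row C) (dim_col C) (\<lambda>(k, j). \<alpha> $ j * C $$ (k, j))"

end

theory Submission
  imports Defs
begin

lemma pow_comm_aux:
  assumes A: "(A :: 'a::semiring_1 mat) \<in> carrier_mat n n"
  shows "A ^\<^sub>m k * A = A * A ^\<^sub>m k"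
proof (induction k)
  case 0 then show ?case using A by simp
next
  case (Suc k)
  have "A ^\<^sub>m Suc k * A = (A ^\<^sub>m k * A) * A" by simp
  also have "\<dots> = (A * A ^\<^sub>m k) * A" using Suc by simp
  also have "\<dots> = A * (A ^\<^sub>m k * A)" using A by (simp add: assoc_mult_mat[of _ n n _ n _ n])
  finally show ?case by simp
qed

lemma pow_vec_Suc:
  assumes A: "(A :: 'a::semiring_1 mat) \<in> carrier_mat n n" and v: "v \<in> carrier_vec n"
  shows "A ^\<^sub>m Suc k *\<^sub>v v = A *\<^sub>v (A ^\<^sub>m k *\<^sub>v v)"
proof -
  have "A ^\<^sub>m Suc k = A * A ^\<^sub>m k" using pow_comm_aux[OF A] by simp
  then show ?thesis using A v by (simp add: assoc_mult_mat_vec[of _ n n _ n])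
qed

lemma evo_mult_Calpha:
  assumes C: "C \<in> carrier_mat N N" and a: "a \<in> carrier_vec N" and b: "b \<in> carrier_vec N"
  shows "evo_mult C b a = C_alpha C a *\<^sub>v b"
  using C a b
  unfolding evo_mult_def C_alpha_def
  by (auto simp: mult_mat_vec_def scalar_prod_def intro!: eq_vecI sum.cong simp: lessThan_atLeast0 ac_simps)

lemma ppow_eq:
  assumes C: "C \<in> carrier_mat N N" and a: "a \<in> carrier_vec N"
  shows "evo_ppow C a (Suc n) = (C_alpha C a ^\<^sub>m n) *\<^sub>v a"
proof (induction n)
  case 0 have "dim_row (C_alpha C a) = N" using C unfolding C_alpha_def by simp
  then show ?case using a by simp
next
  case (Suc n)
  have CA: "C_alpha C a \<in> carrier_mat N N" using C unfolding C_alpha_def by auto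
  have "evo_ppow C a (Suc (Suc n)) = evo_mult C (evo_ppow C a (Suc n)) a" by simp
  also have "\<dots> = C_alpha C a *\<^sub>v ((C_alpha C a ^\<^sub>m n) *\<^sub>v a)" (is "?l = ?r")
  proof -
    have "C_alpha C a ^\<^sub>m n *\<^sub>v a \<in> carrier_vec N"
      using CA a by (meson mult_mat_vec_carrier pow_carrier_mat)
    then show "?l = ?r" using Suc evo_mult_Calpha[OF C a] by simp
  qed
  also have "\<dots> = (C_alpha C a ^\<^sub>m Suc n) *\<^sub>v a" using pow_vec_Suc[OF CA a] by simp
  finally show ?case .
qed

theorem theorem2p5:
  fixes C :: "'a::comm_ring_1 mat" and N :: nat
  assumes "C \<in> carrier_mat N N"
  shows "evo_nil N C \<longleftrightarrow>
    (\<forall>\<alpha> \<in> carrier_vec N. \<exists>k\<ge>1. (C_alpha C \<alpha> ^\<^sub>m k) *\<^sub>v \<alpha> = 0\<^sub>v N)"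
proof
  assume nil: "evo_nil N C"
  show "\<forall>\<alpha> \<in> carrier_vec N. \<exists>k\<ge>1. (C_alpha C \<alpha> ^\<^sub>m k) *\<^sub>v \<alpha> = 0\<^sub>v N"
  proof
    fix a :: "'a vec" assume a: "a \<in> carrier_vec N"
    have CA: "C_alpha C a \<in> carrier_mat N N" using assms unfolding C_alpha_def by auto
    from nil a obtain n where n: "n \<ge> 1" "evo_ppow C a n = 0\<^sub>v N" unfolding evo_nil_def by blast
    then obtain m where m: "n = Suc m" by (cases n) auto
    show "\<exists>k\<ge>1. (C_alpha C a ^\<^sub>m k) *\<^sub>v a = 0\<^sub>v N"
    proof (cases m)
      case 0
      then have "a = 0\<^sub>v N" using n m by simp
      then show ?thesis using CA by (intro exI[of _ 1]) auto
    next
      case (Suc j)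
      then show ?thesis using n m ppow_eq[OF assms a, of m] by (intro exI[of _ m]) auto
    qed
  qed
next
  assume h: "\<forall>\<alpha> \<in> carrier_vec N. \<exists>k\<ge>1. (C_alpha C \<alpha> ^\<^sub>m k) *\<^sub>v \<alpha> = 0\<^sub>v N"
  show "evo_nil N C" unfolding evo_nil_def
  proof
    fix a :: "'a vec" assume a: "a \<in> carrier_vec N"
    from h a obtain k where "k \<ge> 1" "(C_alpha C a ^\<^sub>m k) *\<^sub>v a = 0\<^sub>v N" by blast
    then show "\<exists>n\<ge>1. evo_ppow C a n = 0\<^sub>v N"
      using ppow_eq[OF assms a, of k] by (intro exI[of _ "Suc k"]) auto
  qed
qed

end
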